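(* Let $T$ be an ultrametric tree of radius $1$, let $U$ be a nonempty upper subtree of $T$, and let $M$ be the set of minimal elements of $U$. For each $i\in M$ let $n_i$ be the number of leaves of $T$ that are descendants of $i$ (counting $i$ itself if it is a leaf), and set $n=\sum_{i\in M}n_i$. Then the symmetric matrix $A^{T,U}$ with rows and columns indexed by $M$ and entries \[ A^{T,U}_{ij}=\begin{cases}\big(1-\tfrac1n\big)-H(i\vee j), & i\ne j,\\[2pt] \big(1-\tfrac1n\big)-\big(1-\tfrac1{n_i}\big)H(i), & i=j,\end{cases} \] is positive semidefinite.
   Context: An ultrametric tree is a rooted tree with nonnegative edge lengths such that all leaves have the same distance (sum of edge lengths along the path) from the root; this common distance is the radius. The height $H(v)$ of a vertex $v$ is the distance from $v$ to its furthest descendant (equivalently, to any leaf below it). For distinct vertices $i,j$, $i\vee j$ denotes their lowest common ancestor, the unique vertex lying on all three paths connecting the root, $i$ and $j$. Regard $T$ as a poset with the root as maximum (ancestors above descendants); an upper subtree is a set $U$ of vertices such that every ancestor of a vertex of $U$ lies in $U$, and its minimal elements are the vertices of $U$ none of whose children lie in $U$. *)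

theory Defs
  imports Main "HOL-Library.Multiset" Complex_Main
begin

text \<open>A finite rooted tree on vertex set V with root r, given by a parent map
  (parent r = r, every vertex reaches the root by iterating parent) and edge lengths
  len v = length of the edge from v (v \<noteq> r) to its parent.\<close>

definition rooted_tree :: "'a set \<Rightarrow> 'a \<Rightarrow> ('a \<Rightarrow> 'a) \<Rightarrow> ('a \<Rightarrow> real) \<Rightarrow> bool" where
  "rooted_tree V r parent len \<longleftrightarrow>
     finite V \<and> r \<in> V \<and> parent r = r \<and>
     (\<forall>v\<in>V. parent v \<in> V) \<and>
     (\<forall>v\<in>V. \<exists>k. (parent ^^ k) v = r) \<and>
     (\<forall>v\<in>V - {r}. len v \<ge> 0)"

definition anc :: "('a \<Rightarrow> 'a) \<Rightarrow> 'a \<Rightarrow> 'a \<Rightarrow> bool" where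
  "anc parent u v \<longleftrightarrow> (\<exists>k. (parent ^^ k) v = u)"

definition is_child :: "'a set \<Rightarrow> ('a \<Rightarrow> 'a) \<Rightarrow> 'a \<Rightarrow> 'a \<Rightarrow> bool" where
  "is_child V parent c v \<longleftrightarrow> c \<in> V \<and> c \<noteq> v \<and> parent c = v"

definition is_leaf :: "'a set \<Rightarrow> ('a \<Rightarrow> 'a) \<Rightarrow> 'a \<Rightarrow> bool" where
  "is_leaf V parent v \<longleftrightarrow> v \<in> V \<and> \<not> (\<exists>c. is_child V parent c v)"

definition depth :: "'a \<Rightarrow> ('a \<Rightarrow> 'a) \<Rightarrow> ('a \<Rightarrow> real) \<Rightarrow> 'a \<Rightarrow> real" where
  "depth r parent len v = (\<Sum>k < (LEAST k. (parent ^^ k) v = r). len ((parent ^^ k) v))"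

definition ultrametric_tree :: "'a set \<Rightarrow> 'a \<Rightarrow> ('a \<Rightarrow> 'a) \<Rightarrow> ('a \<Rightarrow> real) \<Rightarrow> real \<Rightarrow> bool" where
  "ultrametric_tree V r parent len rho \<longleftrightarrow>
     rooted_tree V r parent len \<and>
     (\<forall>l. is_leaf V parent l \<longrightarrow> depth r parent len l = rho)"

definition height :: "'a set \<Rightarrow> 'a \<Rightarrow> ('a \<Rightarrow> 'a) \<Rightarrow> ('a \<Rightarrow> real) \<Rightarrow> 'a \<Rightarrow> real" where
  "height V r parent len v =
     Max {depth r parent len l - depth r parent len v | l. is_leaf V parent l \<and> anc parent v l}"

definition lca :: "'a set \<Rightarrow> ('a \<Rightarrow> 'a) \<Rightarrow> 'a \<Rightarrow> 'a \<Rightarrow> 'a" where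
  "lca V parent i j = (THE w. w \<in> V \<and> anc parent w i \<and> anc parent w j \<and>
       (\<forall>u\<in>V. anc parent u i \<and> anc parent u j \<longrightarrow> anc parent u w))"

definition upper_subtree :: "'a set \<Rightarrow> ('a \<Rightarrow> 'a) \<Rightarrow> 'a set \<Rightarrow> bool" where
  "upper_subtree V parent U \<longleftrightarrow> U \<subseteq> V \<and> (\<forall>u\<in>U. \<forall>w\<in>V. anc parent w u \<longrightarrow> w \<in> U)"

definition minimal_elems :: "'a set \<Rightarrow> ('a \<Rightarrow> 'a) \<Rightarrow> 'a set \<Rightarrow> 'a set" where
  "minimal_elems V parent U = {i \<in> U. \<not> (\<exists>c \<in> U. is_child V parent c i)}"

definition num_leaves_below :: "'a set \<Rightarrow> ('a \<Rightarrow> 'a) \<Rightarrow> 'a \<Rightarrow> nat" where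
  "num_leaves_below V parent i = card {l. is_leaf V parent l \<and> anc parent i l}"

definition psd_on :: "'a set \<Rightarrow> ('a \<Rightarrow> 'a \<Rightarrow> real) \<Rightarrow> bool" where
  "psd_on I A \<longleftrightarrow> (\<forall>x :: 'a \<Rightarrow> real. (\<Sum>i\<in>I. \<Sum>j\<in>I. x i * A i j * x j) \<ge> 0)"

definition matrix_TU :: "'a set \<Rightarrow> 'a \<Rightarrow> ('a \<Rightarrow> 'a) \<Rightarrow> ('a \<Rightarrow> real) \<Rightarrow> 'a set \<Rightarrow> 'a \<Rightarrow> 'a \<Rightarrow> real" where
  "matrix_TU V r parent len U i j =
    (let M = minimal_elems V parent U;
         ni = (\<lambda>k. real (num_leaves_below V parent k));
         n = (\<Sum>k\<in>M. ni k);
         H = height V r parent len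
     in if i \<noteq> j then (1 - 1 / n) - H (lca V parent i j)
        else (1 - 1 / n) - (1 - 1 / ni i) * H i)"

end

theory Submission
  imports Defs
begin

lemma two_term:
  fixes a b c d :: real
  assumes "b \<ge> 0" "d \<ge> 0" "b = 0 \<longrightarrow> a = 0" "d = 0 \<longrightarrow> c = 0"
  shows "(a + c)^2 / (b + d) \<le> a^2 / b + c^2 / d"
proof (cases "b = 0 \<or> d = 0")
  case True then show ?thesis using assms by auto
next
  case False
  then have b: "b > 0" and d: "d > 0" using assms by auto
  have "a^2 / b + c^2 / d - (a + c)^2 / (b + d) = (a*d - c*b)^2 / (b*d*(b+d))"
    using b d by (simp add: field_simps power2_eq_square)
  also have "\<dots> \<ge> 0" using b d by simp
  finally show ?thesis by simp
qed

lemma titu: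
  fixes a b :: "'a \<Rightarrow> real"
  assumes "finite A" "\<forall>c\<in>A. b c \<ge> 0 \<and> (b c = 0 \<longrightarrow> a c = 0)"
  shows "(sum a A)^2 / sum b A \<le> (\<Sum>c\<in>A. (a c)^2 / b c) \<and> sum b A \<ge> 0 \<and> (sum b A = 0 \<longrightarrow> sum a A = 0)"
  using assms
proof (induction A rule: finite_induct)
  case empty then show ?case by simp
next
  case (insert x F)
  then have IH: "(sum a F)^2 / sum b F \<le> (\<Sum>c\<in>F. (a c)^2 / b c)" "sum b F \<ge> 0" "sum b F = 0 \<longrightarrow> sum a F = 0"
    by auto
  have x: "b x \<ge> 0" "b x = 0 \<longrightarrow> a x = 0" using insert.prems by auto
  have "(sum a (insert x F))^2 / sum b (insert x F) = (a x + sum a F)^2 / (b x + sum b F)"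
    using insert.hyps by simp
  also have "\<dots> \<le> (a x)^2 / b x + (sum a F)^2 / sum b F"
    using two_term[OF x(1) IH(2) x(2) IH(3)] .
  also have "\<dots> \<le> (a x)^2 / b x + (\<Sum>c\<in>F. (a c)^2 / b c)" using IH(1) by simp
  also have "\<dots> = (\<Sum>c\<in>insert x F. (a c)^2 / b c)" using insert.hyps by simp
  finally show ?case using insert.hyps x IH by auto
qed


locale tr =
  fixes V :: "'a set" and r :: 'a and parent :: "'a \<Rightarrow> 'a" and len :: "'a \<Rightarrow> real"
  assumes rt: "rooted_tree V r parent len"
begin

lemma fin: "finite V" and rV: "r \<in> V" and pr: "parent r = r"
  and pV: "v \<in> V \<Longrightarrow> parent v \<in> V"
  and reach: "v \<in> V \<Longrightarrow> \<exists>k. (parent ^^ k) v = r"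
  and lenpos: "v \<in> V \<Longrightarrow> v \<noteq> r \<Longrightarrow> len v \<ge> 0"
  using rt unfolding rooted_tree_def by auto

lemma funpow_r: "(parent ^^ k) r = r"
  by (induction k) (auto simp: pr)

lemma funpow_V: "v \<in> V \<Longrightarrow> (parent ^^ k) v \<in> V"
  by (induction k) (auto simp: pV)

lemma anc_refl: "anc parent v v"
  unfolding anc_def by (rule exI[of _ 0]) simp

lemma anc_trans: "anc parent u v \<Longrightarrow> anc parent v w \<Longrightarrow> anc parent u w"
  unfolding anc_def
proof -
  assume "\<exists>k. (parent ^^ k) v = u" "\<exists>k. (parent ^^ k) w = v"
  then obtain a b where "(parent ^^ a) v = u" "(parent ^^ b) w = v" by blast
  then have "(parent ^^ (a + b)) w = u" by (simp add: funpow_add)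
  then show "\<exists>k. (parent ^^ k) w = u" by blast
qed

lemma anc_V: "anc parent u v \<Longrightarrow> v \<in> V \<Longrightarrow> u \<in> V"
  unfolding anc_def using funpow_V by blast

lemma anc_r: "v \<in> V \<Longrightarrow> anc parent r v"
  unfolding anc_def using reach by blast

lemma anc_parent: "anc parent (parent v) v"
  unfolding anc_def by (rule exI[of _ 1]) simp

lemma anc_neq_parent: "anc parent u v \<Longrightarrow> u \<noteq> v \<Longrightarrow> anc parent u (parent v)"
  unfolding anc_def
proof -
  assume "\<exists>k. (parent ^^ k) v = u" "u \<noteq> v"
  then obtain k where k: "(parent ^^ k) v = u" by blast
  with \<open>u \<noteq> v\<close> obtain m where "k = Suc m" by (cases k) auto
  with k have "(parent ^^ m) (parent v) = u" by (simp add: funpow_Suc_right del: funpow.simps)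
  then show "\<exists>k. (parent ^^ k) (parent v) = u" by blast
qed

lemma anc_linear: "anc parent u w \<Longrightarrow> anc parent v w \<Longrightarrow> anc parent u v \<or> anc parent v u"
  unfolding anc_def
proof -
  assume "\<exists>k. (parent ^^ k) w = u" "\<exists>k. (parent ^^ k) w = v"
  then obtain a b where a: "(parent ^^ a) w = u" and b: "(parent ^^ b) w = v" by blast
  show "(\<exists>k. (parent ^^ k) v = u) \<or> (\<exists>k. (parent ^^ k) u = v)"
  proof (cases "a \<le> b")
    case True
    have "(parent ^^ b) w = (parent ^^ ((b - a) + a)) w" using True by simp
    also have "\<dots> = (parent ^^ (b - a)) u" using a by (simp add: funpow_add)
    finally have "(parent ^^ (b - a)) u = v" using b by simp
    then show ?thesis by blast
  next
    case False
    have "(parent ^^ a) w = (parent ^^ ((a - b) + b)) w" using False by simp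
    also have "\<dots> = (parent ^^ (a - b)) v" using b by (simp add: funpow_add)
    finally have "(parent ^^ (a - b)) v = u" using a by simp
    then show ?thesis by blast
  qed
qed

lemma periodic_r:
  assumes v: "v \<in> V" and p: "(parent ^^ p) v = v" and p0: "p > 0"
  shows "v = r"
proof -
  obtain k where k: "(parent ^^ k) v = r" using reach v by blast
  have per: "(parent ^^ (m * p)) v = v" for m
    by (induction m) (simp_all add: funpow_add p)
  have "k \<le> k * p" using p0 by simp
  then have "(parent ^^ (k * p)) v = (parent ^^ ((k * p - k) + k)) v" by simp
  also have "\<dots> = (parent ^^ (k * p - k)) ((parent ^^ k) v)" by (simp add: funpow_add)
  also have "\<dots> = r" by (simp add: k funpow_r)
  finally show ?thesis using per[of k] by simp
qed

lemma anc_antisym: "v \<in> V \<Longrightarrow> anc parent u v \<Longrightarrow> anc parent v u \<Longrightarrow> u = v"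
  unfolding anc_def
proof -
  assume v: "v \<in> V" and "\<exists>k. (parent ^^ k) v = u" "\<exists>k. (parent ^^ k) u = v"
  then obtain a b where a: "(parent ^^ a) v = u" and b: "(parent ^^ b) u = v" by blast
  have ab: "(parent ^^ (b + a)) v = v" using a b by (simp add: funpow_add)
  show "u = v"
  proof (cases "b + a = 0")
    case True then show ?thesis using a by simp
  next
    case False
    then have "v = r" using periodic_r[OF v ab] by simp
    then show ?thesis using a funpow_r by simp
  qed
qed

lemma parent_neq: "v \<in> V \<Longrightarrow> v \<noteq> r \<Longrightarrow> parent v \<noteq> v"
  using periodic_r[of v 1] by auto

definition L where "L v = (LEAST k. (parent ^^ k) v = r)"

lemma L_r: "L r = 0" unfolding L_def by simp

lemma L_step: assumes "v \<in> V" "v \<noteq> r" shows "L v = Suc (L (parent v))"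
proof -
  obtain k where k: "(parent ^^ k) v = r" using reach assms by blast
  have "L v = Suc (LEAST m. (parent ^^ (Suc m)) v = r)"
    unfolding L_def using k assms(2) by (intro Least_Suc) auto
  moreover have "(LEAST m. (parent ^^ (Suc m)) v = r) = L (parent v)"
    unfolding L_def by (simp add: funpow_Suc_right del: funpow.simps)
  ultimately show ?thesis by simp
qed

lemma depth_r: "depth r parent len r = 0"
  unfolding depth_def by simp

lemma depth_step: assumes "v \<in> V" "v \<noteq> r"
  shows "depth r parent len v = len v + depth r parent len (parent v)"
proof -
  have "depth r parent len v = (\<Sum>k < Suc (L (parent v)). len ((parent ^^ k) v))"
    unfolding depth_def L_step[OF assms, unfolded L_def, symmetric] L_def by simp
  also have "\<dots> = len v + (\<Sum>k < L (parent v). len ((parent ^^ Suc k) v))"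
    by (subst sum.lessThan_Suc_shift) simp
  also have "\<dots> = len v + depth r parent len (parent v)"
    unfolding depth_def L_def by (simp add: funpow_Suc_right del: funpow.simps)
  finally show ?thesis .
qed

lemma anc_set_step: assumes "v \<in> V" "v \<noteq> r"
  shows "{w \<in> V - {r}. anc parent w v} = insert v {w \<in> V - {r}. anc parent w (parent v)}"
    and "v \<notin> {w \<in> V - {r}. anc parent w (parent v)}"
proof -
  show "{w \<in> V - {r}. anc parent w v} = insert v {w \<in> V - {r}. anc parent w (parent v)}"
    using assms anc_neq_parent anc_refl anc_trans[OF _ anc_parent] by blast
  show "v \<notin> {w \<in> V - {r}. anc parent w (parent v)}"
    using anc_antisym[OF pV[OF assms(1)], of v] anc_parent[of v] parent_neq[OF assms] by auto
qed

lemma depth_edges: "v \<in> V \<Longrightarrow> depth r parent len v = (\<Sum>w \<in> {w \<in> V - {r}. anc parent w v}. len w)"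
proof (induction "L v" arbitrary: v)
  case 0
  then obtain k where k: "(parent ^^ k) v = r" using reach by blast
  have "v = r" using 0 unfolding L_def
    by (metis (mono_tags, lifting) LeastI_ex funpow_0 k)
  moreover have e: "{w \<in> V - {r}. anc parent w r} = {}"
    unfolding anc_def using funpow_r by auto
  ultimately show ?case using depth_r by (metis sum.empty)
next
  case (Suc m)
  have vr: "v \<noteq> r" using Suc.hyps(2) L_r by auto
  have mL: "m = L (parent v)" using Suc.hyps(2) L_step[OF Suc.prems vr] by simp
  have IH: "depth r parent len (parent v) = (\<Sum>w \<in> {w \<in> V - {r}. anc parent w (parent v)}. len w)"
    by (rule Suc.hyps(1)[OF mL pV[OF Suc.prems]])
  have fin2: "finite {w \<in> V - {r}. anc parent w (parent v)}" using fin by simp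
  have "sum len {w \<in> V - {r}. anc parent w v} = sum len (insert v {w \<in> V - {r}. anc parent w (parent v)})"
    using anc_set_step(1)[OF Suc.prems vr] by (rule arg_cong)
  also have "\<dots> = len v + sum len {w \<in> V - {r}. anc parent w (parent v)}"
    using sum.insert[OF fin2 anc_set_step(2)[OF Suc.prems vr], of len] by simp
  also have "\<dots> = depth r parent len v"
    using IH depth_step[OF Suc.prems vr] by linarith
  finally show ?case by (rule sym)
qed


lemma leaf_exists: assumes "v \<in> V" shows "\<exists>l. is_leaf V parent l \<and> anc parent v l"
proof -
  let ?D = "{w\<in>V. anc parent v w}"
  have fD: "finite ?D" using fin by simp
  have nD: "?D \<noteq> {}" using assms anc_refl by blast
  have "Max (L ` ?D) \<in> L ` ?D" using fD nD by (intro Max_in) auto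
  then obtain w where w: "w \<in> ?D" and wm: "L w = Max (L ` ?D)" by auto
  have "is_leaf V parent w"
    unfolding is_leaf_def is_child_def
  proof (intro conjI notI)
    show "w \<in> V" using w by simp
    assume "\<exists>c. c \<in> V \<and> c \<noteq> w \<and> parent c = w"
    then obtain c where c: "c \<in> V" "c \<noteq> w" "parent c = w" by blast
    have cr: "c \<noteq> r" using c pr by auto
    have "L c = Suc (L w)" using L_step[OF c(1) cr] c by simp
    moreover have "c \<in> ?D" using c w anc_trans[of v w c] anc_parent[of c] by auto
    then have "L c \<le> L w" unfolding wm using fD by (intro Max_ge) auto
    ultimately show False by simp
  qed
  then show ?thesis using w by blast
qed

definition des where "des v = {w\<in>V. anc parent v w}"
definition ch where "ch v = {c\<in>V. c \<noteq> v \<and> parent c = v}"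

lemma fin_des: "finite (des v)" unfolding des_def using fin by simp
lemma fin_ch: "finite (ch v)" unfolding ch_def using fin by simp
lemma des_r: "des r = V" unfolding des_def using anc_r by auto

lemma ch_anc: "c \<in> ch v \<Longrightarrow> anc parent v c"
  unfolding ch_def using anc_parent by auto

lemma des_decomp: assumes "v \<in> V" shows "des v = insert v (\<Union>c\<in>ch v. des c)"
proof
  show "des v \<subseteq> insert v (\<Union>c\<in>ch v. des c)"
  proof
    fix w assume w: "w \<in> des v"
    show "w \<in> insert v (\<Union>c\<in>ch v. des c)"
    proof (cases "w = v")
      case True then show ?thesis by simp
    next
      case False
      from w have wV: "w \<in> V" and ex: "\<exists>k. (parent ^^ k) w = v" unfolding des_def anc_def by auto
      define k0 where "k0 = (LEAST k. (parent ^^ k) w = v)"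
      have k0: "(parent ^^ k0) w = v" unfolding k0_def using ex by (rule LeastI_ex)
      have "k0 \<noteq> 0"
      proof
        assume "k0 = 0" then show False using k0 False by simp
      qed
      then obtain m where m: "k0 = Suc m" by (cases k0) auto
      define c where "c = (parent ^^ m) w"
      have pc: "parent c = v" using k0 m unfolding c_def by simp
      have "c \<noteq> v" unfolding c_def using not_less_Least[of m "\<lambda>k. (parent ^^ k) w = v"] m k0_def by simp
      moreover have "c \<in> V" unfolding c_def using funpow_V wV by simp
      ultimately have "c \<in> ch v" using pc unfolding ch_def by simp
      moreover have "w \<in> des c" unfolding des_def anc_def c_def using wV by blast
      ultimately show ?thesis by blast
    qed
  qed
  show "insert v (\<Union>c\<in>ch v. des c) \<subseteq> des v"
    using assms anc_refl ch_anc anc_trans unfolding des_def by blast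
qed

lemma v_notin_des_ch: assumes "c \<in> ch v" shows "v \<notin> des c"
proof
  assume "v \<in> des c"
  then have "anc parent c v" unfolding des_def by simp
  moreover have "anc parent v c" using ch_anc assms by simp
  moreover have "v \<in> V" using assms pV unfolding ch_def by auto
  ultimately have "c = v" using anc_antisym by blast
  then show False using assms unfolding ch_def by simp
qed

lemma des_disj: assumes "c \<in> ch v" "c' \<in> ch v" "c \<noteq> c'" shows "des c \<inter> des c' = {}"
proof (rule ccontr)
  assume "des c \<inter> des c' \<noteq> {}"
  then obtain w where "anc parent c w" "anc parent c' w" unfolding des_def by auto
  then have "anc parent c c' \<or> anc parent c' c" using anc_linear by blast
  moreover have "\<not> anc parent c c'" if "c \<in> ch v" "c' \<in> ch v" "c \<noteq> c'" for c c'
  proof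
    assume "anc parent c c'"
    then have "anc parent c (parent c')" using anc_neq_parent that(3) by blast
    then have "anc parent c v" using that(2) unfolding ch_def by auto
    then have "v \<in> des c" using that pV unfolding ch_def des_def by auto
    then show False using v_notin_des_ch that by blast
  qed
  ultimately show False using assms by blast
qed

lemma sum_des: assumes "v \<in> V"
  shows "sum f (des v) = f v + (\<Sum>c\<in>ch v. sum f (des c))"
proof -
  have "v \<notin> (\<Union>c\<in>ch v. des c)" using v_notin_des_ch by blast
  moreover have "finite (\<Union>c\<in>ch v. des c)" using fin_ch fin_des by blast
  ultimately have "sum f (des v) = f v + sum f (\<Union>c\<in>ch v. des c)"
    using des_decomp[OF assms] by simp
  also have "sum f (\<Union>c\<in>ch v. des c) = (\<Sum>c\<in>ch v. sum f (des c))"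
    using fin_ch fin_des des_disj by (intro sum.UNION_disjoint) auto
  finally show ?thesis .
qed

lemma card_des_less: assumes "c \<in> ch v" shows "card (des c) < card (des v)"
proof (rule psubset_card_mono[OF fin_des])
  have vV: "v \<in> V" using assms pV unfolding ch_def by auto
  have "des c \<subseteq> des v" using ch_anc[OF assms] anc_trans unfolding des_def by blast
  moreover have "v \<in> des v" using vV anc_refl unfolding des_def by simp
  ultimately show "des c \<subset> des v" using v_notin_des_ch[OF assms] by blast
qed

lemma lca_props: assumes i: "i \<in> V" and j: "j \<in> V"
  shows "lca V parent i j \<in> V \<and> (\<forall>w\<in>V. anc parent w (lca V parent i j) \<longleftrightarrow> anc parent w i \<and> anc parent w j)"
proof -
  obtain K where K: "(parent ^^ K) i = r" using reach i by blast
  have ex: "\<exists>k. anc parent ((parent ^^ k) i) j" using K anc_r j by metis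
  define k0 where "k0 = (LEAST k. anc parent ((parent ^^ k) i) j)"
  define w0 where "w0 = (parent ^^ k0) i"
  have w0j: "anc parent w0 j" unfolding w0_def k0_def using ex by (rule LeastI_ex)
  have w0i: "anc parent w0 i" unfolding w0_def anc_def by blast
  have w0V: "w0 \<in> V" unfolding w0_def using funpow_V i by simp
  have low: "anc parent u w0" if u1: "u \<in> V" and u2: "anc parent u i" and u3: "anc parent u j" for u
  proof -
    obtain k where k: "(parent ^^ k) i = u" using u2 unfolding anc_def by blast
    have "k0 \<le> k" unfolding k0_def using u3 k by (intro Least_le) simp
    then have "(parent ^^ k) i = (parent ^^ ((k - k0) + k0)) i" by simp
    also have "\<dots> = (parent ^^ (k - k0)) w0" unfolding w0_def by (simp add: funpow_add)
    finally show ?thesis using k unfolding anc_def by metis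
  qed
  let ?P = "\<lambda>w. w \<in> V \<and> anc parent w i \<and> anc parent w j \<and>
       (\<forall>u\<in>V. anc parent u i \<and> anc parent u j \<longrightarrow> anc parent u w)"
  have P0: "?P w0" using w0V w0i w0j low by blast
  have "lca V parent i j = w0" unfolding lca_def
  proof (rule the_equality)
    show "?P w0" by (rule P0)
    fix x assume "?P x"
    then have "anc parent x w0" "anc parent w0 x" using low P0 by blast+
    then show "x = w0" using anc_antisym[OF w0V] by blast
  qed
  then show ?thesis using P0 anc_trans by blast
qed

context
  assumes leaves1: "\<forall>l. is_leaf V parent l \<longrightarrow> depth r parent len l = 1"
begin

lemma height_eq: assumes "v \<in> V" shows "height V r parent len v = 1 - depth r parent len v"
proof -
  obtain l where l: "is_leaf V parent l" "anc parent v l" using leaf_exists[OF assms] by blast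
  have dl: "1 - depth r parent len v = depth r parent len l - depth r parent len v" using leaves1 l by simp
  have "{depth r parent len l - depth r parent len v | l. is_leaf V parent l \<and> anc parent v l}
        = {1 - depth r parent len v}"
  proof (rule equalityI)
    show "{depth r parent len l - depth r parent len v | l. is_leaf V parent l \<and> anc parent v l}
        \<subseteq> {1 - depth r parent len v}" using leaves1 by auto
    show "{1 - depth r parent len v} \<subseteq> {depth r parent len l - depth r parent len v | l. is_leaf V parent l \<and> anc parent v l}"
      using l dl by blast
  qed
  then show ?thesis unfolding height_def by simp
qed

lemma depth_le1: assumes "v \<in> V" shows "depth r parent len v \<le> 1"
proof -
  obtain l where l: "is_leaf V parent l" "anc parent v l" using leaf_exists[OF assms] by blast
  have lV: "l \<in> V" using l unfolding is_leaf_def by simp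
  have "depth r parent len v = (\<Sum>w \<in> {w \<in> V - {r}. anc parent w v}. len w)" by (rule depth_edges[OF assms])
  also have "\<dots> \<le> (\<Sum>w \<in> {w \<in> V - {r}. anc parent w l}. len w)"
    using fin lenpos anc_trans[OF _ l(2)] by (intro sum_mono2) auto
  also have "\<dots> = depth r parent len l" by (rule depth_edges[OF lV, symmetric])
  also have "\<dots> = 1" using leaves1 l by simp
  finally show ?thesis .
qed

end

lemma num_leaves_ge1: assumes "v \<in> V" shows "num_leaves_below V parent v \<ge> 1"
proof -
  have "finite {l. is_leaf V parent l \<and> anc parent v l}"
    using fin unfolding is_leaf_def by (rule finite_subset[rotated]) auto
  moreover have "{l. is_leaf V parent l \<and> anc parent v l} \<noteq> {}" using leaf_exists[OF assms] by blast
  ultimately show ?thesis unfolding num_leaves_below_def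
    by (simp add: Suc_le_eq card_gt_0_iff)
qed


definition gM :: "'a set \<Rightarrow> ('a \<Rightarrow> real) \<Rightarrow> 'a \<Rightarrow> real" where
  "gM M x w = (if w \<in> M then x w else 0)"
definition SM where "SM M x v = (\<Sum>w\<in>des v. gM M x w)"
definition NM where "NM M nn v = (\<Sum>w\<in>des v. gM M nn w)"
definition qM where "qM M x nn w = (if w \<in> M then (1 - depth r parent len w) * (x w)^2 / nn w else 0)"
definition GM where "GM M x nn v = (\<Sum>w\<in>des v. len w * (SM M x w)^2 + qM M x nn w)"

context
  fixes M :: "'a set" and x nn :: "'a \<Rightarrow> real"
  assumes nn1: "\<forall>i\<in>M. nn i \<ge> 1"
    and dle1: "\<forall>v\<in>V. depth r parent len v \<le> 1"
begin

lemma SN_props: "NM M nn c \<ge> 0 \<and> (NM M nn c = 0 \<longrightarrow> SM M x c = 0) \<and> (NM M nn c \<noteq> 0 \<longrightarrow> NM M nn c \<ge> 1)"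
proof -
  have h0: "\<forall>w\<in>des c. gM M nn w \<ge> 0" using nn1 unfolding gM_def by force
  have A: "NM M nn c \<ge> 0" unfolding NM_def using h0 by (intro sum_nonneg) auto
  have B: "SM M x c = 0" if "NM M nn c = 0"
  proof -
    have z: "\<forall>w\<in>des c. gM M nn w = 0"
      using that sum_nonneg_eq_0_iff[OF fin_des, where f="gM M nn" and v1=c] h0 unfolding NM_def by simp
    have "\<forall>w\<in>des c. w \<notin> M"
    proof (intro ballI notI)
      fix w assume "w \<in> des c" "w \<in> M"
      then have "nn w = 0" using z unfolding gM_def by auto
      then show False using nn1 \<open>w \<in> M\<close> by force
    qed
    then show ?thesis unfolding SM_def gM_def by simp
  qed
  have C: "NM M nn c \<ge> 1" if ne: "NM M nn c \<noteq> 0"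
  proof -
    obtain w where w: "w \<in> des c" "gM M nn w \<noteq> 0" using ne sum.not_neutral_contains_not_neutral unfolding NM_def by blast
    then have wM: "w \<in> M" unfolding gM_def by (auto split: if_splits)
    have "gM M nn w \<le> NM M nn c" unfolding NM_def using w(1) h0 fin_des by (intro member_le_sum) auto
    then show ?thesis using nn1 wM unfolding gM_def by auto
  qed
  show ?thesis using A B C by blast
qed

lemma main_ind: "v \<in> V \<Longrightarrow>
   (1 - depth r parent len v) * (SM M x v)^2 / NM M nn v \<le> GM M x nn v - len v * (SM M x v)^2"
proof (induction "card (des v)" arbitrary: v rule: less_induct)
  case less
  have vV: "v \<in> V" by (rule less.prems)
  define Hv where "Hv = 1 - depth r parent len v"
  have Hv0: "Hv \<ge> 0" unfolding Hv_def using dle1 vV by auto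
  have per_c: "Hv * (SM M x c)^2 / NM M nn c \<le> GM M x nn c" if c: "c \<in> ch v" for c
  proof -
    have cV: "c \<in> V" and cv: "c \<noteq> v" and pc: "parent c = v" using c unfolding ch_def by auto
    have cr: "c \<noteq> r" using cv pc pr by auto
    have IH: "(1 - depth r parent len c) * (SM M x c)^2 / NM M nn c \<le> GM M x nn c - len c * (SM M x c)^2"
      using less.hyps[OF card_des_less[OF c] cV] .
    have dc: "depth r parent len c = len c + depth r parent len v" using depth_step[OF cV cr] pc by simp
    have lc: "len c \<ge> 0" using lenpos[OF cV cr] .
    show ?thesis
    proof (cases "NM M nn c = 0")
      case True
      then have "SM M x c = 0" using SN_props by blast
      then show ?thesis using IH True by simp
    next
      case False
      then have N1: "NM M nn c \<ge> 1" using SN_props by blast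
      have "len c * (SM M x c)^2 / NM M nn c \<le> len c * (SM M x c)^2 / 1"
        using N1 lc by (intro divide_left_mono) auto
      then have "len c * (SM M x c)^2 / NM M nn c \<le> len c * (SM M x c)^2" by simp
      moreover have "Hv * (SM M x c)^2 / NM M nn c =
          (1 - depth r parent len c) * (SM M x c)^2 / NM M nn c + len c * (SM M x c)^2 / NM M nn c"
        unfolding Hv_def dc by (simp add: add_divide_distrib[symmetric] algebra_simps)
      ultimately show ?thesis using IH by linarith
    qed
  qed
  have q_eq: "qM M x nn v = Hv * ((gM M x v)^2 / gM M nn v)"
    unfolding qM_def gM_def Hv_def by simp
  have GV: "GM M x nn v - len v * (SM M x v)^2 = qM M x nn v + (\<Sum>c\<in>ch v. GM M x nn c)"
    unfolding GM_def using sum_des[OF vV, of "\<lambda>w. len w * (SM M x w)^2 + qM M x nn w"] by simp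
  have "Hv * (\<Sum>c\<in>ch v. (SM M x c)^2 / NM M nn c) = (\<Sum>c\<in>ch v. Hv * (SM M x c)^2 / NM M nn c)"
    by (simp add: sum_distrib_left)
  also have "\<dots> \<le> (\<Sum>c\<in>ch v. GM M x nn c)" using per_c by (intro sum_mono) auto
  finally have s1: "Hv * (\<Sum>c\<in>ch v. (SM M x c)^2 / NM M nn c) \<le> (\<Sum>c\<in>ch v. GM M x nn c)" .
  have T: "(\<Sum>c\<in>ch v. SM M x c)^2 / (\<Sum>c\<in>ch v. NM M nn c) \<le> (\<Sum>c\<in>ch v. (SM M x c)^2 / NM M nn c)
     \<and> (\<Sum>c\<in>ch v. NM M nn c) \<ge> 0 \<and> ((\<Sum>c\<in>ch v. NM M nn c) = 0 \<longrightarrow> (\<Sum>c\<in>ch v. SM M x c) = 0)"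
    using SN_props fin_ch by (intro titu) auto
  have gv: "gM M nn v \<ge> 0" "gM M nn v = 0 \<longrightarrow> gM M x v = 0" using nn1 unfolding gM_def by auto
  have S_eq: "SM M x v = gM M x v + (\<Sum>c\<in>ch v. SM M x c)" unfolding SM_def using sum_des[OF vV] .
  have N_eq: "NM M nn v = gM M nn v + (\<Sum>c\<in>ch v. NM M nn c)" unfolding NM_def using sum_des[OF vV] .
  have "(SM M x v)^2 / NM M nn v \<le> (gM M x v)^2 / gM M nn v + (\<Sum>c\<in>ch v. SM M x c)^2 / (\<Sum>c\<in>ch v. NM M nn c)"
    unfolding S_eq N_eq by (rule two_term[OF gv(1) T[THEN conjunct2, THEN conjunct1] gv(2) T[THEN conjunct2, THEN conjunct2]])
  also have "\<dots> \<le> (gM M x v)^2 / gM M nn v + (\<Sum>c\<in>ch v. (SM M x c)^2 / NM M nn c)" using T by simp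
  finally have "Hv * ((SM M x v)^2 / NM M nn v) \<le> Hv * ((gM M x v)^2 / gM M nn v + (\<Sum>c\<in>ch v. (SM M x c)^2 / NM M nn c))"
    using Hv0 by (rule mult_left_mono)
  also have "\<dots> = qM M x nn v + Hv * (\<Sum>c\<in>ch v. (SM M x c)^2 / NM M nn c)"
    unfolding q_eq by (simp add: algebra_simps)
  also have "\<dots> \<le> GM M x nn v - len v * (SM M x v)^2" unfolding GV using s1 by simp
  finally show ?case unfolding Hv_def by simp
qed

end
end

theorem proposition2p2:
  fixes V :: "'a set" and r :: 'a and parent :: "'a \<Rightarrow> 'a" and len :: "'a \<Rightarrow> real"
    and U :: "'a set"
  assumes "ultrametric_tree V r parent len 1"
    and "upper_subtree V parent U" and "U \<noteq> {}"
  shows "psd_on (minimal_elems V parent U) (matrix_TU V r parent len U)"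
proof -
  have rt: "rooted_tree V r parent len" and leaves1: "\<forall>l. is_leaf V parent l \<longrightarrow> depth r parent len l = 1"
    using assms(1) unfolding ultrametric_tree_def by auto
  interpret tr V r parent len by unfold_locales (rule rt)
  define M where "M = minimal_elems V parent U"
  have MV: "M \<subseteq> V" using assms(2) unfolding M_def minimal_elems_def upper_subtree_def by auto
  have finM: "finite M" using MV fin finite_subset by blast
  define nn where "nn = (\<lambda>k. real (num_leaves_below V parent k))"
  define n where "n = (\<Sum>k\<in>M. nn k)"
  have nn1: "\<forall>i\<in>M. nn i \<ge> 1" unfolding nn_def using num_leaves_ge1 MV by force
  have dle1: "\<forall>v\<in>V. depth r parent len v \<le> 1" using depth_le1[OF leaves1] by blast
  define D where "D = (\<lambda>i j. (\<Sum>w\<in>V - {r}. if anc parent w i \<and> anc parent w j then len w else 0))"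
  define E where "E = (\<lambda>i. (1 - depth r parent len i) / nn i)"
  have finV': "finite (V - {r})" using fin by simp
  have entry: "matrix_TU V r parent len U i j = D i j - 1 / n + (if i = j then E i else 0)"
    if i: "i \<in> M" and j: "j \<in> M" for i j
  proof -
    have iV: "i \<in> V" and jV: "j \<in> V" using i j MV by auto
    have Dii: "depth r parent len i = D i i"
      unfolding D_def depth_edges[OF iV] using sum.inter_filter[OF finV'] by simp
    show ?thesis
    proof (cases "i = j")
      case True
      have h: "height V r parent len i = 1 - D i i" using height_eq[OF leaves1 iV] Dii by simp
      have e: "(1 - 1 / nn i) * (1 - D i i) = (1 - D i i) - (1 - D i i) / nn i"
        by (simp add: algebra_simps diff_divide_distrib)
      have "matrix_TU V r parent len U i j = 1 - 1 / n - (1 - 1 / nn i) * height V r parent len i"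
        unfolding matrix_TU_def Let_def M_def[symmetric] nn_def[symmetric] n_def[symmetric]
        using True by simp
      then show ?thesis using True h e Dii unfolding E_def by simp
    next
      case False
      have lp: "lca V parent i j \<in> V" "\<forall>w\<in>V. anc parent w (lca V parent i j) \<longleftrightarrow> anc parent w i \<and> anc parent w j"
        using lca_props[OF iV jV] by auto
      have "{w \<in> V - {r}. anc parent w (lca V parent i j)} = {w \<in> V - {r}. anc parent w i \<and> anc parent w j}"
        using lp(2) by auto
      then have "depth r parent len (lca V parent i j) = D i j"
        unfolding D_def depth_edges[OF lp(1)] using sum.inter_filter[OF finV'] by simp
      then show ?thesis
        unfolding matrix_TU_def Let_def M_def[symmetric] nn_def[symmetric] n_def[symmetric]
        using False height_eq[OF leaves1 lp(1)] by simp
    qed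
  qed
  show ?thesis unfolding psd_on_def M_def[symmetric]
  proof
    fix x :: "'a \<Rightarrow> real"
    define y where "y = (\<lambda>w i. if anc parent w i then x i else 0)"
    have S_eq: "SM M x w = (\<Sum>i\<in>M. y w i)" for w
    proof -
      have "SM M x w = (\<Sum>u\<in>des w \<inter> M. x u)"
        unfolding SM_def gM_def using sum.inter_restrict[OF fin_des, of x w M] by simp
      also have "des w \<inter> M = M \<inter> {i. anc parent w i}" using MV unfolding des_def by auto
      also have "(\<Sum>u\<in>M \<inter> {i. anc parent w i}. x u) = (\<Sum>i\<in>M. y w i)"
        unfolding y_def using sum.inter_restrict[OF finM, of x "{i. anc parent w i}"] by simp
      finally show ?thesis .
    qed
    have partA: "(\<Sum>i\<in>M. \<Sum>j\<in>M. x i * D i j * x j) = (\<Sum>w\<in>V - {r}. len w * (SM M x w)^2)"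
    proof -
      have "x i * D i j * x j = (\<Sum>w\<in>V - {r}. len w * (y w i * y w j))" for i j
        unfolding D_def y_def by (simp add: sum_distrib_left sum_distrib_right) (intro sum.cong, auto)
      then have "(\<Sum>i\<in>M. \<Sum>j\<in>M. x i * D i j * x j) = (\<Sum>i\<in>M. \<Sum>j\<in>M. \<Sum>w\<in>V - {r}. len w * (y w i * y w j))"
        by simp
      also have "\<dots> = (\<Sum>w\<in>V - {r}. \<Sum>i\<in>M. \<Sum>j\<in>M. len w * (y w i * y w j))"
        by (simp add: sum.swap[where A="V - {r}"])
      also have "\<dots> = (\<Sum>w\<in>V - {r}. len w * ((\<Sum>i\<in>M. y w i) * (\<Sum>j\<in>M. y w j)))"
      proof (intro sum.cong refl)
        fix w
        have "(\<Sum>i\<in>M. \<Sum>j\<in>M. len w * (y w i * y w j)) = len w * (\<Sum>i\<in>M. \<Sum>j\<in>M. y w i * y w j)"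
          by (simp add: sum_distrib_left)
        also have "(\<Sum>i\<in>M. \<Sum>j\<in>M. y w i * y w j) = (\<Sum>i\<in>M. y w i) * (\<Sum>j\<in>M. y w j)"
          by (rule sum_product[symmetric])
        finally show "(\<Sum>i\<in>M. \<Sum>j\<in>M. len w * (y w i * y w j)) = len w * ((\<Sum>i\<in>M. y w i) * (\<Sum>j\<in>M. y w j))" .
      qed
      also have "\<dots> = (\<Sum>w\<in>V - {r}. len w * (SM M x w)^2)"
        by (simp add: S_eq power2_eq_square)
      finally show ?thesis .
    qed
    have partB: "(\<Sum>i\<in>M. \<Sum>j\<in>M. x i * (1 / n) * x j) = (\<Sum>i\<in>M. x i)^2 / n"
      by (simp add: power2_eq_square sum_product sum_divide_distrib)
    have partC: "(\<Sum>i\<in>M. \<Sum>j\<in>M. x i * (if i = j then E i else 0) * x j) = (\<Sum>i\<in>M. E i * (x i)^2)"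
    proof -
      have "(\<Sum>j\<in>M. x i * (if i = j then E i else 0) * x j) = E i * (x i)^2" if "i \<in> M" for i
      proof -
        have "(\<Sum>j\<in>M. x i * (if i = j then E i else 0) * x j) = (\<Sum>j\<in>M. if i = j then x i * E i * x j else 0)"
          by (intro sum.cong) auto
        also have "\<dots> = x i * E i * x i" using finM that by simp
        finally show ?thesis by (simp add: power2_eq_square)
      qed
      then show ?thesis by simp
    qed
    have form: "(\<Sum>i\<in>M. \<Sum>j\<in>M. x i * matrix_TU V r parent len U i j * x j)
       = (\<Sum>w\<in>V - {r}. len w * (SM M x w)^2) - (\<Sum>i\<in>M. x i)^2 / n + (\<Sum>i\<in>M. E i * (x i)^2)"
    proof -
      have "(\<Sum>i\<in>M. \<Sum>j\<in>M. x i * matrix_TU V r parent len U i j * x j)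
          = (\<Sum>i\<in>M. \<Sum>j\<in>M. x i * D i j * x j - x i * (1 / n) * x j + x i * (if i = j then E i else 0) * x j)"
      proof (intro sum.cong refl)
        fix i j assume i: "i \<in> M" and j: "j \<in> M"
        have gen: "\<And>a b c p q :: real. p * (a - b + c) * q = p * a * q - p * b * q + p * c * q"
          by (simp add: algebra_simps)
        show "x i * matrix_TU V r parent len U i j * x j =
          x i * D i j * x j - x i * (1 / n) * x j + x i * (if i = j then E i else 0) * x j"
          unfolding entry[OF i j] by (rule gen)
      qed
      also have "\<dots> = (\<Sum>i\<in>M. \<Sum>j\<in>M. x i * D i j * x j) - (\<Sum>i\<in>M. \<Sum>j\<in>M. x i * (1 / n) * x j)
           + (\<Sum>i\<in>M. \<Sum>j\<in>M. x i * (if i = j then E i else 0) * x j)"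
        by (simp add: sum.distrib sum_subtractf)
      finally show ?thesis using partA partB partC by simp
    qed
    have mi: "(1 - depth r parent len r) * (SM M x r)^2 / NM M nn r \<le> GM M x nn r - len r * (SM M x r)^2"
      using main_ind[OF nn1 dle1 rV] .
    have Sr: "SM M x r = (\<Sum>i\<in>M. x i)"
      unfolding SM_def gM_def des_r using sum.inter_restrict[OF fin, of x M] MV
      by (simp add: Int_absorb1)
    have Nr: "NM M nn r = n"
      unfolding NM_def gM_def des_r n_def using sum.inter_restrict[OF fin, of nn M] MV
      by (simp add: Int_absorb1)
    have Qr: "(\<Sum>w\<in>V. qM M x nn w) = (\<Sum>i\<in>M. E i * (x i)^2)"
      unfolding qM_def E_def using sum.inter_restrict[OF fin, of "\<lambda>w. (1 - depth r parent len w) * (x w)^2 / nn w" M] MV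
      by (simp add: Int_absorb1)
    have Gr: "GM M x nn r - len r * (SM M x r)^2 = (\<Sum>w\<in>V - {r}. len w * (SM M x w)^2) + (\<Sum>w\<in>V. qM M x nn w)"
      unfolding GM_def des_r sum.distrib using sum.remove[OF fin rV, of "\<lambda>w. len w * (SM M x w)^2"] by simp
    show "0 \<le> (\<Sum>i\<in>M. \<Sum>j\<in>M. x i * matrix_TU V r parent len U i j * x j)"
      using mi[unfolded Gr, unfolded Qr] unfolding form by (simp add: Sr Nr depth_r)
  qed
qed
end
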